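(* Let $\mathcal{H}$ be a hierarchical generator, $\varphi\in\mathcal{H}$, $k\ge0$, and $\psi\in\mathrm{ch}^k(\varphi)\cap\mathcal{H}$. Then $k\le\mathrm{gap}_{\mathcal{H}}(\psi)\le\mathrm{gap}_{\mathcal{H}}(\varphi)+k$.
   Context: Fix integers $d\ge1$, $n\ge2$, $m\ge2$; $s=n-1$, $p=m-1$. B-splines $\varphi^\ell_{\vec i}(\vec x)=\prod_kQ(n^\ell x_k-i_k)$ for $\ell\ge0$, $\vec i\in\mathbb{Z}^d$, $Q$ the uniform B-spline of order $m$ with knots $0,\dots,m$; $\mathfrak{B}$ the set of all of them; $\mathcal{B}^0=\{\varphi^0_{\vec i}:\vec i\in[-p:0]^d\}$. Children $\mathrm{ch}(\varphi^\ell_{\vec i})=\{\varphi^{\ell+1}_{\vec k}:n\vec i\le\vec k\le n\vec i+sm\}$, extended to sets by union, $\mathrm{ch}^k$ iterated. Cells $I^\ell_{\vec i}=\prod_k[i_kn^{-\ell},(i_k+1)n^{-\ell})$, cell children $\mathrm{ch}(I^\ell_{\vec i})=\{I^{\ell+1}_{\vec k}:n\vec i\le\vec k\le n\vec i+s\}$, $\mathrm{ch}^k$ iterated, $\mathrm{ch}^{-k}(I)=\{J:I\in\mathrm{ch}^k(J)\}$. $\mathbb{I}(\varphi^\ell_{\vec i})=\{I^\ell_{\vec k}:\vec i\le\vec k\le\vec i+p\}$, $\mathbb{I}^k(\varphi)=\mathrm{ch}^k(\mathbb{I}(\varphi))$ ($k\in\mathbb{Z}$), $\mathbb{B}^k(I)=\{\varphi\in\mathfrak{B}:I\in\mathbb{I}^{-k}(\varphi)\}$,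 extended to sets by union; $\mathcal{O}(\varphi,j,\mathcal{H})=\mathbb{B}^j(\mathbb{I}(\varphi))\cap\mathcal{H}$. A lineage is a finite $\mathcal{L}\subset\mathfrak{B}$ with $\mathcal{L}\subset\mathcal{B}^0\cup\mathrm{ch}(\mathcal{L})$; its hierarchical generator is $(\mathcal{B}^0\cup\mathrm{ch}(\mathcal{L}))\setminus\mathcal{L}$. For $\varphi\in\mathcal{H}$, $\mathrm{gap}_{\mathcal{H}}(\varphi)=\sup\{g\in\mathbb{Z}:\mathcal{O}(\varphi,-g,\mathcal{H})\neq\emptyset\}$. *)

theory Defs
  imports Main
begin

text \<open>Tensor-product B-splines and cells, represented by (level, multi-index).
 The dimension d is the cardinality of the finite index type 'd.
 Parameters: n (refinement factor), m (spline order); s = n-1, p = m-1.\<close>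

datatype 'd bspline = BS nat "'d \<Rightarrow> int"
datatype 'd cell = Cell nat "'d \<Rightarrow> int"

definition B0 :: "nat \<Rightarrow> 'd bspline set" where
  "B0 m = {BS 0 i | i. \<forall>c. - (int m - 1) \<le> i c \<and> i c \<le> 0}"

fun chB :: "nat \<Rightarrow> nat \<Rightarrow> 'd bspline \<Rightarrow> 'd bspline set" where
  "chB n m (BS l i) = {BS (Suc l) k | k. \<forall>c. int n * i c \<le> k c \<and> k c \<le> int n * i c + (int n - 1) * int m}"

definition chBset :: "nat \<Rightarrow> nat \<Rightarrow> 'd bspline set \<Rightarrow> 'd bspline set" where
  "chBset n m S = (\<Union>f\<in>S. chB n m f)"

definition chB_pow :: "nat \<Rightarrow> nat \<Rightarrow> nat \<Rightarrow> 'd bspline set \<Rightarrow> 'd bspline set" where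
  "chB_pow n m k = (chBset n m ^^ k)"

fun chC :: "nat \<Rightarrow> 'd cell \<Rightarrow> 'd cell set" where
  "chC n (Cell l i) = {Cell (Suc l) k | k. \<forall>c. int n * i c \<le> k c \<and> k c \<le> int n * i c + (int n - 1)}"

definition chCset :: "nat \<Rightarrow> 'd cell set \<Rightarrow> 'd cell set" where
  "chCset n S = (\<Union>I\<in>S. chC n I)"

definition chC_pow :: "nat \<Rightarrow> nat \<Rightarrow> 'd cell set \<Rightarrow> 'd cell set" where
  "chC_pow n k = (chCset n ^^ k)"

definition chC_neg :: "nat \<Rightarrow> nat \<Rightarrow> 'd cell set \<Rightarrow> 'd cell set" where
  "chC_neg n k S = {J. \<exists>I\<in>S. I \<in> chC_pow n k {J}}"

definition chC_int :: "nat \<Rightarrow> int \<Rightarrow> 'd cell set \<Rightarrow> 'd cell set" where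
  "chC_int n k S = (if 0 \<le> k then chC_pow n (nat k) S else chC_neg n (nat (- k)) S)"

fun suppI :: "nat \<Rightarrow> 'd bspline \<Rightarrow> 'd cell set" where
  "suppI m (BS l i) = {Cell l k | k. \<forall>c. i c \<le> k c \<and> k c \<le> i c + (int m - 1)}"

definition IIk :: "nat \<Rightarrow> nat \<Rightarrow> int \<Rightarrow> 'd bspline \<Rightarrow> 'd cell set" where
  "IIk n m k \<phi> = chC_int n k (suppI m \<phi>)"

definition BBk :: "nat \<Rightarrow> nat \<Rightarrow> int \<Rightarrow> 'd cell \<Rightarrow> 'd bspline set" where
  "BBk n m k I = {\<phi>. I \<in> IIk n m (- k) \<phi>}"

definition BBset :: "nat \<Rightarrow> nat \<Rightarrow> int \<Rightarrow> 'd cell set \<Rightarrow> 'd bspline set" where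
  "BBset n m k S = (\<Union>I\<in>S. BBk n m k I)"

definition Ov :: "nat \<Rightarrow> nat \<Rightarrow> 'd bspline \<Rightarrow> int \<Rightarrow> 'd bspline set \<Rightarrow> 'd bspline set" where
  "Ov n m \<phi> j H = BBset n m j (suppI m \<phi>) \<inter> H"

definition lineage :: "nat \<Rightarrow> nat \<Rightarrow> 'd bspline set \<Rightarrow> bool" where
  "lineage n m L \<longleftrightarrow> finite L \<and> L \<subseteq> B0 m \<union> chBset n m L"

definition hier_generator :: "nat \<Rightarrow> nat \<Rightarrow> 'd bspline set \<Rightarrow> bool" where
  "hier_generator n m H \<longleftrightarrow> (\<exists>L. lineage n m L \<and> H = (B0 m \<union> chBset n m L) - L)"

definition gap :: "nat \<Rightarrow> nat \<Rightarrow> 'd bspline set \<Rightarrow> 'd bspline \<Rightarrow> int" where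
  "gap n m H \<phi> = Sup {g::int. Ov n m \<phi> (- g) H \<noteq> {}}"

end

theory Submission imports Defs begin

lemma divchar: "(n::int) > 0 \<Longrightarrow> (n*a \<le> b \<and> b \<le> n*a + (n-1)) \<longleftrightarrow> b div n = a"
proof
  assume n: "n > 0" and h: "n*a \<le> b \<and> b \<le> n*a + (n-1)"
  show "b div n = a"
    using h n by (intro int_div_pos_eq[where r="b - n*a"]) (auto simp: algebra_simps)
next
  assume n: "n > 0" and h: "b div n = a"
  have "b = n * (b div n) + b mod n" by simp
  moreover have "0 \<le> b mod n" "b mod n < n" using n by auto
  ultimately have "n*(b div n) \<le> b \<and> b \<le> n*(b div n) + (n-1)" by linarith
  then show "n*a \<le> b \<and> b \<le> n*a + (n-1)" using h by simp
qed

fun lev :: "'d cell \<Rightarrow> nat" where "lev (Cell l i) = l"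
fun idx :: "'d cell \<Rightarrow> 'd \<Rightarrow> int" where "idx (Cell l i) = i"

lemma cell_eq: "I = J \<longleftrightarrow> lev I = lev J \<and> idx I = idx J"
  by (cases I; cases J) auto

definition desc :: "nat \<Rightarrow> nat \<Rightarrow> 'd cell \<Rightarrow> 'd cell \<Rightarrow> bool" where
  "desc n j J I \<longleftrightarrow> lev I = lev J + j \<and> (\<forall>c. idx I c div int n ^ j = idx J c)"

lemma chC_alt: "n > 0 \<Longrightarrow> I \<in> chC n J \<longleftrightarrow> desc n 1 J I"
proof (cases J; cases I)
  fix l i l' i' assume n: "n > 0" and J: "J = Cell l i" and I: "I = Cell l' i'"
  have "int n > 0" using n by simp
  then show ?thesis using divchar[of "int n"] unfolding J I desc_def by auto
qed

lemma divpow: "(x::int) div int n ^ (a+b) = x div int n ^ a div int n ^ b"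
  by (simp add: power_add zdiv_zmult2_eq)

lemma desc_trans: "desc n a J K \<Longrightarrow> desc n b K I \<Longrightarrow> desc n (a+b) J I"
  unfolding desc_def by (auto simp: divpow[of _ _ b a, unfolded add.commute[of b a]])

lemma desc_factor: assumes "desc n a J I" "desc n b K I" "b \<le> a" shows "desc n (a-b) J K"
proof -
  obtain d where a: "a = b + d" using assms(3) le_Suc_ex by blast
  show ?thesis using assms unfolding desc_def a by (auto simp: divpow)
qed

lemma chCset_UN: "chCset n (\<Union>A) = (\<Union>S\<in>A. chCset n S)"
  unfolding chCset_def by blast

lemma chC_pow_UN: "chC_pow n j S = (\<Union>J\<in>S. chC_pow n j {J})"
proof (induction j)
  case 0 then show ?case by (simp add: chC_pow_def)
next
  case (Suc j)
  have "chC_pow n (Suc j) S = chCset n (chC_pow n j S)" by (simp add: chC_pow_def)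
  also have "\<dots> = (\<Union>J\<in>S. chCset n (chC_pow n j {J}))" using Suc unfolding chCset_def by blast
  also have "\<dots> = (\<Union>J\<in>S. chC_pow n (Suc j) {J})" by (simp add: chC_pow_def)
  finally show ?case .
qed

lemma pow_single: "n > 0 \<Longrightarrow> I \<in> chC_pow n j {J} \<longleftrightarrow> desc n j J I"
proof (induction j arbitrary: I)
  case 0 then show ?case by (auto simp: chC_pow_def desc_def cell_eq)
next
  case (Suc j)
  have "I \<in> chC_pow n (Suc j) {J} \<longleftrightarrow> (\<exists>K. desc n j J K \<and> desc n 1 K I)"
    using Suc chC_alt[OF Suc.prems] by (auto simp: chC_pow_def chCset_def)
  also have "\<dots> \<longleftrightarrow> desc n (Suc j) J I"
  proof
    assume "\<exists>K. desc n j J K \<and> desc n 1 K I" then show "desc n (Suc j) J I"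
      using desc_trans by fastforce
  next
    assume d: "desc n (Suc j) J I"
    define K where "K = Cell (lev I - 1) (\<lambda>c. idx I c div int n)"
    have "desc n 1 K I" using d unfolding K_def desc_def by auto
    then show "\<exists>K. desc n j J K \<and> desc n 1 K I" using desc_factor[OF d, of 1 K] by auto
  qed
  finally show ?case .
qed

lemma mem_int: "n > 0 \<Longrightarrow> I \<in> chC_int n g S \<longleftrightarrow>
   (\<exists>J\<in>S. (0 \<le> g \<and> desc n (nat g) J I) \<or> (g < 0 \<and> desc n (nat (-g)) I J))"
  unfolding chC_int_def chC_neg_def
  by (subst chC_pow_UN) (auto simp: pow_single)

lemma lev_supp: "I \<in> suppI m \<psi> \<Longrightarrow> lev I = (case \<psi> of BS l i \<Rightarrow> l)"
  by (cases \<psi>) auto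

lemma supp_ne: "m \<ge> 1 \<Longrightarrow> \<exists>I. I \<in> suppI m \<psi>"
  by (cases \<psi>) auto

lemma supp_child: assumes n: "n > 0" and "\<psi> \<in> chB n m \<chi>" "I \<in> suppI m \<psi>"
  shows "\<exists>I'\<in>suppI m \<chi>. desc n 1 I' I"
proof (cases \<chi>)
  case (BS l i)
  then obtain kk where psi: "\<psi> = BS (Suc l) kk" and kk: "\<forall>c. int n * i c \<le> kk c \<and> kk c \<le> int n * i c + (int n - 1) * int m"
    using assms(2) by auto
  obtain q where I: "I = Cell (Suc l) q" and q: "\<forall>c. kk c \<le> q c \<and> q c \<le> kk c + (int m - 1)"
    using assms(3) psi by auto
  have nn: "int n > 0" using n by simp
  have lo: "i c \<le> q c div int n" for c
  proof -
    have "int n * i c \<le> kk c" "kk c \<le> q c" using kk q by auto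
    then have "int n * i c \<le> q c" by linarith
    then have "(int n * i c) div int n \<le> q c div int n" using nn by (intro zdiv_mono1) auto
    then show ?thesis using nn by simp
  qed
  have hi: "q c div int n \<le> i c + (int m - 1)" for c
  proof -
    have "kk c \<le> int n * i c + (int n - 1) * int m" "q c \<le> kk c + (int m - 1)" using kk q by auto
    then have "q c \<le> int n * i c + (int n - 1) * int m + (int m - 1)" by linarith
    also have "\<dots> = int n * (i c + int m) - 1" by (simp add: algebra_simps)
    finally have "q c < int n * (i c + int m)" by simp
    moreover have "q c = int n * (q c div int n) + q c mod int n" by simp
    moreover have "q c mod int n \<ge> 0" using nn by simp
    ultimately have lt: "int n * (q c div int n) < int n * (i c + int m)" by linarith
    have "q c div int n < i c + int m"
    proof (rule ccontr)
      assume "\<not> q c div int n < i c + int m"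
      then have "int n * (i c + int m) \<le> int n * (q c div int n)" using nn by (intro mult_left_mono) auto
      then show False using lt by linarith
    qed
    then show ?thesis by simp
  qed
  show ?thesis
    apply (rule bexI[of _ "Cell l (\<lambda>c. q c div int n)"])
    using lo hi by (auto simp: BS I desc_def)
qed

lemma supp_desc: assumes n: "n > 0" and "\<psi> \<in> chB_pow n m k {\<phi>}" "I \<in> suppI m \<psi>"
  shows "\<exists>I'\<in>suppI m \<phi>. desc n k I' I"
  using assms(2,3)
proof (induction k arbitrary: \<psi> I)
  case 0 then show ?case by (auto simp: chB_pow_def desc_def)
next
  case (Suc k)
  then obtain \<chi> where chi: "\<chi> \<in> chB_pow n m k {\<phi>}" "\<psi> \<in> chB n m \<chi>"
    by (auto simp: chB_pow_def chBset_def)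
  obtain I'' where "I'' \<in> suppI m \<chi>" "desc n 1 I'' I" using supp_child[OF n chi(2) Suc.prems(2)] by auto
  moreover obtain I' where "I' \<in> suppI m \<phi>" "desc n k I' I''" using Suc.IH[OF chi(1) \<open>I'' \<in> _\<close>] by auto
  ultimately show ?case using desc_trans by fastforce
qed

definition G where "G n m H \<phi> = {g::int. Ov n m \<phi> (- g) H \<noteq> {}}"

lemma G_iff: "n > 0 \<Longrightarrow> g \<in> G n m H \<phi> \<longleftrightarrow> (\<exists>\<psi>'\<in>H. \<exists>I\<in>suppI m \<phi>. \<exists>J\<in>suppI m \<psi>'.
    (0 \<le> g \<and> desc n (nat g) J I) \<or> (g < 0 \<and> desc n (nat (-g)) I J))"
  unfolding G_def Ov_def BBset_def BBk_def IIk_def by (auto simp: mem_int)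

lemma G_bdd: assumes "n > 0" shows "bdd_above (G n m H \<phi>)"
proof (rule bdd_aboveI[of _ "int (case \<phi> of BS l i \<Rightarrow> l)"])
  fix g assume "g \<in> G n m H \<phi>"
  then obtain \<psi>' I J where "I \<in> suppI m \<phi>" "J \<in> suppI m \<psi>'"
    "(0 \<le> g \<and> desc n (nat g) J I) \<or> (g < 0 \<and> desc n (nat (-g)) I J)"
    using G_iff[OF assms] by blast
  then show "g \<le> int (case \<phi> of BS l i \<Rightarrow> l)"
    using lev_supp[of I m \<phi>] unfolding desc_def by auto
qed

theorem lemma7p3:
  fixes n m :: nat and H :: "'d::finite bspline set" and \<phi> \<psi> :: "'d bspline" and k :: nat
  assumes "n \<ge> 2" and "m \<ge> 2"
    and "hier_generator n m H"
    and "\<phi> \<in> H"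
    and "\<psi> \<in> chB_pow n m k {\<phi>} \<inter> H"
  shows "int k \<le> gap n m H \<psi> \<and> gap n m H \<psi> \<le> gap n m H \<phi> + int k"
proof -
  have n: "n > 0" using assms(1) by simp
  have gapG: "gap n m H x = Sup (G n m H x)" for x unfolding gap_def G_def ..
  obtain I0 where I0: "I0 \<in> suppI m \<psi>" using supp_ne[of m \<psi>] assms(2) by auto
  have kG: "int k \<in> G n m H \<psi>"
  proof -
    obtain I' where "I' \<in> suppI m \<phi>" "desc n k I' I0" using supp_desc[OF n _ I0] assms(5) by auto
    then show ?thesis using G_iff[OF n] assms(4) I0 by fastforce
  qed
  have 1: "int k \<le> gap n m H \<psi>" unfolding gapG using kG G_bdd[OF n] by (rule cSup_upper)
  have "\<forall>g\<in>G n m H \<psi>. g - int k \<in> G n m H \<phi>"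
  proof
    fix g assume "g \<in> G n m H \<psi>"
    then obtain \<psi>' I J where ps: "\<psi>' \<in> H" and I: "I \<in> suppI m \<psi>" and J: "J \<in> suppI m \<psi>'" and
      r: "(0 \<le> g \<and> desc n (nat g) J I) \<or> (g < 0 \<and> desc n (nat (-g)) I J)"
      using G_iff[OF n] by blast
    obtain I' where I': "I' \<in> suppI m \<phi>" and d: "desc n k I' I" using supp_desc[OF n _ I] assms(5) by auto
    have "(0 \<le> g - int k \<and> desc n (nat (g - int k)) J I') \<or> (g - int k < 0 \<and> desc n (nat (-(g - int k))) I' J)"
    proof (cases "0 \<le> g")
      case True
      show ?thesis
      proof (cases "int k \<le> g")
        case True
        then have "desc n (nat g - k) J I'" using r desc_factor[of n "nat g" J I k I'] d by auto
        moreover have "nat g - k = nat (g - int k)" using True by simp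
        ultimately show ?thesis using True by auto
      next
        case False
        then have "desc n (k - nat g) I' J" using r \<open>0 \<le> g\<close> desc_factor[OF d, of "nat g" J] by auto
        moreover have "k - nat g = nat (- (g - int k))" using False \<open>0 \<le> g\<close> by simp
        ultimately show ?thesis using False by auto
      qed
    next
      case False
      then have "desc n (k + nat (-g)) I' J" using r desc_trans[OF d] by auto
      moreover have "k + nat (-g) = nat (- (g - int k))" using False by simp
      ultimately show ?thesis using False by auto
    qed
    then show "g - int k \<in> G n m H \<phi>" using G_iff[OF n] ps I' J by blast
  qed
  then have "\<forall>g\<in>G n m H \<psi>. g \<le> gap n m H \<phi> + int k"
    unfolding gapG using cSup_upper[OF _ G_bdd[OF n]] by fastforce
  then have 2: "gap n m H \<psi> \<le> gap n m H \<phi> + int k"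
    unfolding gapG[of \<psi>] using kG by (intro cSup_least) auto
  show ?thesis using 1 2 by simp
qed
end
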